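(* Let $G$ be a finite abelian group with a free Brauer action on the Brauer graph $(\Gamma,\mathfrak o,m)$, let $(\overline\Gamma,\overline{\mathfrak o},\overline m)$ be the Brauer orbit graph, and let $G$ act on the quiver $Q_\Gamma$ by the induced action. Then the orbit quiver $\overline{Q_\Gamma}$ is isomorphic to the quiver $Q_{\overline\Gamma}$ of the Brauer orbit graph, via the map sending the orbit of $v_i$ to $v_{\bar i}$ and the orbit of the arrow corresponding to "$j$ is the successor of $i$ at $\mu$" to the arrow corresponding to "$\bar j$ is the successor of $\bar i$ at $\bar\mu$".
   Context: Brauer graphs. A Brauer graph $(\Gamma,\mathfrak o,m)$ is a finite connected graph $\Gamma$ (loops and multiple edges allowed) with vertex set $\Gamma_0$, edge set $\Gamma_1$ and at least one edge, together with a multiplicity function $m:\Gamma_0\to\mathbb Z_{\ge 1}$ and, for each vertex $\mu$, a cyclic ordering $\mathfrak o$ of the edges incident with $\mu$. A loop at $\mu$ occurs twice in the cyclic ordering at $\mu$; its two occurrences are regarded as two distinct elements of $\Gamma_1$ (each with its own successor). Edge $j$ is the successor of edge $i$ at $\mu$ if $j$ immediately follows $i$ in the cyclic ordering at $\mu$. The valency $\operatorname{val}(\mu)$ is the number of edges incident with $\mu$, loops counted twice; if $\operatorname{val}(\mu)=1$ the unique edge at $\mu$ is its own successor. An edge $i$ is truncated at its endpoint $\mu$ if $\operatorname{val}(\mu)=1$ and $m(\mu)=1$. The quiver $Q_\Gamma$: if $\Gamma$ is a single non-loop edge whose two endpoints have multiplicity $1$, $Q_\Gamma$ has one vertex and one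 loop. Otherwise $Q_\Gamma$ has a vertex $v_i$ for each $i\in\Gamma_1$ and an arrow $v_i\to v_j$ for each vertex $\mu$ and each pair $(i,j)$ with $j$ the successor of $i$ at $\mu$ and $i$ not truncated at $\mu$. Brauer actions. Let $G$ be a finite abelian group. A Brauer action of $G$ on $(\Gamma,\mathfrak o,m)$ is a faithful action $x\mapsto x^g$ of $G$ on the graph $\Gamma$ (on vertices and edges, compatible with incidence) such that for all $g\in G$: if $j$ is the successor of $i$ at $\mu$ then $j^g$ is the successor of $i^g$ at $\mu^g$, and $m(\mu^g)=m(\mu)$. It is a free Brauer action if $G$ acts freely on $\Gamma_1$. For a free Brauer action, the Brauer orbit graph $(\overline\Gamma,\overline{\mathfrak o},\overline m)$ has as vertices the $G$-orbits $\bar\mu$ of vertices and as edges the $G$-orbits $\bar i$ of edges, $\bar i$ being incident with $\bar\mu$ when $i$ is incident with $\mu$; its cyclic ordering is given by: $\bar j$ is the successor of $\bar i$ at $\bar\mu$ whenever $j$ is the successor of $i$ at $\mu$; and $\overline m(\bar\mu)=\operatorname{val}(\mu)m(\mu)/\operatorname{val}(\bar\mu)$. Induced action and orbit quiver. A free Brauer action induces a free action of $G$ on $Q_\Gamma$: $v_i^g=v_{i^g}$, and the arrow corresponding to "$j$ is the successor of $i$ at $\mu$" is sent to the arrow corresponding to "$j^g$ is the successor of $i^g$ at $\mu^g$". The orbit quiver $\overline{Q_\Gamma}$ has as vertices the $G$-orbits of vertices of $Q_\Gamma$ and as arrows the $G$-orbits of arrows, the orbit of $a:v\to w$ being an arrow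 from the orbit of $v$ to the orbit of $w$. *)

theory Defs
  imports "HOL-Algebra.Group"
begin

text \<open>A Brauer graph is given by a vertex set V, an edge set E and a set H of
edge-occurrences (half-edges): each half-edge h lies on the edge eo h and is
incident with the vertex vt h; each edge has exactly two occurrences (for a loop
at mu both occurrences lie at mu).  The cyclic ordering at mu is the
permutation sc (successor) of the half-edges at mu, required to be a single
cycle.  m is the multiplicity.\<close>

definition graph_adj :: "'h set \<Rightarrow> ('h \<Rightarrow> 'e) \<Rightarrow> ('h \<Rightarrow> 'v) \<Rightarrow> ('v \<times> 'v) set" where
  "graph_adj H eo vt = {(vt h, vt h') | h h'. h \<in> H \<and> h' \<in> H \<and> eo h = eo h'}"

definition brauer_graph ::
  "'v set \<Rightarrow> 'e set \<Rightarrow> 'h set \<Rightarrow> ('h \<Rightarrow> 'e) \<Rightarrow> ('h \<Rightarrow> 'v) \<Rightarrow> ('h \<Rightarrow> 'h) \<Rightarrow> ('v \<Rightarrow> nat) \<Rightarrow> bool" where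
  "brauer_graph V E H eo vt sc m \<longleftrightarrow>
     finite V \<and> finite E \<and> finite H \<and> E \<noteq> {} \<and>
     (\<forall>h\<in>H. eo h \<in> E \<and> vt h \<in> V) \<and>
     (\<forall>e\<in>E. card {h\<in>H. eo h = e} = 2) \<and>
     (\<forall>\<mu>\<in>V. \<forall>\<nu>\<in>V. (\<mu>, \<nu>) \<in> (graph_adj H eo vt)\<^sup>*) \<and>
     bij_betw sc H H \<and>
     (\<forall>h\<in>H. vt (sc h) = vt h) \<and>
     (\<forall>h\<in>H. \<forall>h'\<in>H. vt h = vt h' \<longrightarrow> (\<exists>n. (sc ^^ n) h = h')) \<and>
     (\<forall>\<mu>\<in>V. m \<mu> \<ge> 1)"

definition valency :: "'h set \<Rightarrow> ('h \<Rightarrow> 'v) \<Rightarrow> 'v \<Rightarrow> nat" where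
  "valency H vt \<mu> = card {h\<in>H. vt h = \<mu>}"

definition truncated :: "'h set \<Rightarrow> ('h \<Rightarrow> 'v) \<Rightarrow> ('v \<Rightarrow> nat) \<Rightarrow> 'h \<Rightarrow> bool" where
  "truncated H vt m h \<longleftrightarrow> valency H vt (vt h) = 1 \<and> m (vt h) = 1"

record ('n, 'a) quiver =
  qverts :: "'n set"
  qarrows :: "'a set"
  qsrc :: "'a \<Rightarrow> 'n"
  qtgt :: "'a \<Rightarrow> 'n"

definition quiver_iso ::
  "('n, 'a) quiver \<Rightarrow> ('m, 'b) quiver \<Rightarrow> ('n \<Rightarrow> 'm) \<Rightarrow> ('a \<Rightarrow> 'b) \<Rightarrow> bool" where
  "quiver_iso Q Q' f0 f1 \<longleftrightarrow>
     bij_betw f0 (qverts Q) (qverts Q') \<and> bij_betw f1 (qarrows Q) (qarrows Q') \<and>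
     (\<forall>a\<in>qarrows Q. qsrc Q' (f1 a) = f0 (qsrc Q a) \<and> qtgt Q' (f1 a) = f0 (qtgt Q a))"

text \<open>The quiver of a Brauer graph: vertices are the edges; the arrow attached to
the non-truncated occurrence h (i = eo h at mu = vt h, with successor occurrence
sc h, j = eo (sc h)) is Some h : v_i \<rightarrow> v_j.  In the exceptional case of a single
non-loop edge with both endpoint multiplicities 1, there is one loop None.\<close>

definition brauer_quiver ::
  "'v set \<Rightarrow> 'e set \<Rightarrow> 'h set \<Rightarrow> ('h \<Rightarrow> 'e) \<Rightarrow> ('h \<Rightarrow> 'v) \<Rightarrow> ('h \<Rightarrow> 'h) \<Rightarrow> ('v \<Rightarrow> nat)
     \<Rightarrow> ('e, 'h option) quiver" where
  "brauer_quiver V E H eo vt sc m =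
     (if card E = 1 \<and> inj_on vt H \<and> (\<forall>h\<in>H. m (vt h) = 1)
      then \<lparr>qverts = E, qarrows = {None}, qsrc = (\<lambda>_. the_elem E), qtgt = (\<lambda>_. the_elem E)\<rparr>
      else \<lparr>qverts = E, qarrows = Some ` {h\<in>H. \<not> truncated H vt m h},
            qsrc = (\<lambda>a. eo (the a)), qtgt = (\<lambda>a. eo (sc (the a)))\<rparr>)"

definition group_act :: "('g, 'b) monoid_scheme \<Rightarrow> 'x set \<Rightarrow> ('g \<Rightarrow> 'x \<Rightarrow> 'x) \<Rightarrow> bool" where
  "group_act G X f \<longleftrightarrow>
     (\<forall>g\<in>carrier G. \<forall>x\<in>X. f g x \<in> X) \<and>
     (\<forall>x\<in>X. f \<one>\<^bsub>G\<^esub> x = x) \<and>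
     (\<forall>g\<in>carrier G. \<forall>g'\<in>carrier G. \<forall>x\<in>X. f (g \<otimes>\<^bsub>G\<^esub> g') x = f g (f g' x))"

definition orbit :: "('g, 'b) monoid_scheme \<Rightarrow> ('g \<Rightarrow> 'x \<Rightarrow> 'x) \<Rightarrow> 'x \<Rightarrow> 'x set" where
  "orbit G f x = (\<lambda>g. f g x) ` carrier G"

definition brauer_action ::
  "('g, 'b) monoid_scheme \<Rightarrow> 'v set \<Rightarrow> 'e set \<Rightarrow> 'h set \<Rightarrow> ('h \<Rightarrow> 'e) \<Rightarrow> ('h \<Rightarrow> 'v)
     \<Rightarrow> ('h \<Rightarrow> 'h) \<Rightarrow> ('v \<Rightarrow> nat)
     \<Rightarrow> ('g \<Rightarrow> 'v \<Rightarrow> 'v) \<Rightarrow> ('g \<Rightarrow> 'e \<Rightarrow> 'e) \<Rightarrow> ('g \<Rightarrow> 'h \<Rightarrow> 'h) \<Rightarrow> bool" where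
  "brauer_action G V E H eo vt sc m av ae ah \<longleftrightarrow>
     group_act G V av \<and> group_act G E ae \<and> group_act G H ah \<and>
     (\<forall>g\<in>carrier G. \<forall>h\<in>H. eo (ah g h) = ae g (eo h) \<and> vt (ah g h) = av g (vt h)) \<and>
     (\<forall>g\<in>carrier G. (\<forall>v\<in>V. av g v = v) \<and> (\<forall>e\<in>E. ae g e = e) \<longrightarrow> g = \<one>\<^bsub>G\<^esub>) \<and>
     (\<forall>g\<in>carrier G. \<forall>h\<in>H. sc (ah g h) = ah g (sc h)) \<and>
     (\<forall>g\<in>carrier G. \<forall>v\<in>V. m (av g v) = m v)"

definition free_brauer_action where
  "free_brauer_action G V E H eo vt sc m av ae ah \<longleftrightarrow>
     brauer_action G V E H eo vt sc m av ae ah \<and>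
     (\<forall>g\<in>carrier G. \<forall>e\<in>E. ae g e = e \<longrightarrow> g = \<one>\<^bsub>G\<^esub>)"

definition orbit_mult ::
  "('g, 'b) monoid_scheme \<Rightarrow> 'h set \<Rightarrow> ('h \<Rightarrow> 'v) \<Rightarrow> ('v \<Rightarrow> nat) \<Rightarrow> ('g \<Rightarrow> 'h \<Rightarrow> 'h)
     \<Rightarrow> 'v set \<Rightarrow> nat" where
  "orbit_mult G H vt m ah Y =
     (let \<mu> = (SOME \<mu>. \<mu> \<in> Y) in
        (valency H vt \<mu> * m \<mu>) div valency (orbit G ah ` H) (\<lambda>X. vt ` X) Y)"

definition orbit_quiver ::
  "('g, 'b) monoid_scheme \<Rightarrow> ('n, 'a) quiver \<Rightarrow> ('g \<Rightarrow> 'n \<Rightarrow> 'n) \<Rightarrow> ('g \<Rightarrow> 'a \<Rightarrow> 'a)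
     \<Rightarrow> ('n set, 'a set) quiver" where
  "orbit_quiver G Q an aa =
     \<lparr>qverts = orbit G an ` qverts Q, qarrows = orbit G aa ` qarrows Q,
      qsrc = (\<lambda>A. qsrc Q ` A), qtgt = (\<lambda>A. qtgt Q ` A)\<rparr>"

end

theory Submission
  imports Defs
begin

lemma ga_closed: "group_act G X f \<Longrightarrow> g \<in> carrier G \<Longrightarrow> x \<in> X \<Longrightarrow> f g x \<in> X"
  by (simp add: group_act_def)
lemma ga_one: "group_act G X f \<Longrightarrow> x \<in> X \<Longrightarrow> f \<one>\<^bsub>G\<^esub> x = x"
  by (simp add: group_act_def)
lemma ga_mult: "group_act G X f \<Longrightarrow> g \<in> carrier G \<Longrightarrow> g' \<in> carrier G \<Longrightarrow> x \<in> X
   \<Longrightarrow> f (g \<otimes>\<^bsub>G\<^esub> g') x = f g (f g' x)"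
  by (simp add: group_act_def)
lemma ga_inv:
  assumes "group G" "group_act G X f" "g \<in> carrier G" "x \<in> X"
  shows "f (inv\<^bsub>G\<^esub> g) (f g x) = x"
proof -
  have "f (inv\<^bsub>G\<^esub> g) (f g x) = f (inv\<^bsub>G\<^esub> g \<otimes>\<^bsub>G\<^esub> g) x"
    using assms by (simp add: ga_mult group.inv_closed)
  also have "\<dots> = x" using assms by (simp add: group.l_inv ga_one)
  finally show ?thesis .
qed
lemma orbit_self: "group G \<Longrightarrow> group_act G X f \<Longrightarrow> x \<in> X \<Longrightarrow> x \<in> orbit G f x"
  unfolding orbit_def by (rule image_eqI[of _ _ "\<one>\<^bsub>G\<^esub>"]) (auto simp: ga_one group.is_monoid monoid.one_closed)
lemma orbit_sub: "group_act G X f \<Longrightarrow> x \<in> X \<Longrightarrow> orbit G f x \<subseteq> X"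
  unfolding orbit_def by (auto simp: ga_closed)
lemma orbit_eq:
  assumes gr: "group G" and ga: "group_act G X f" and x: "x \<in> X" and y: "y \<in> orbit G f x"
  shows "orbit G f y = orbit G f x"
proof -
  obtain g where g: "g \<in> carrier G" "y = f g x" using y unfolding orbit_def by auto
  show ?thesis
  proof
    show "orbit G f y \<subseteq> orbit G f x"
    proof
      fix z assume "z \<in> orbit G f y"
      then obtain g' where g': "g' \<in> carrier G" "z = f g' y" unfolding orbit_def by auto
      have "z = f (g' \<otimes>\<^bsub>G\<^esub> g) x" using g g' ga x by (simp add: ga_mult)
      moreover have "g' \<otimes>\<^bsub>G\<^esub> g \<in> carrier G" using g g' gr by (simp add: group.is_monoid monoid.m_closed)
      ultimately show "z \<in> orbit G f x" unfolding orbit_def by auto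
    qed
  next
    show "orbit G f x \<subseteq> orbit G f y"
    proof
      fix z assume "z \<in> orbit G f x"
      then obtain g' where g': "g' \<in> carrier G" "z = f g' x" unfolding orbit_def by auto
      have ig: "inv\<^bsub>G\<^esub> g \<in> carrier G" using g gr by (simp add: group.inv_closed)
      have "f (g' \<otimes>\<^bsub>G\<^esub> inv\<^bsub>G\<^esub> g) y = f g' (f (inv\<^bsub>G\<^esub> g) (f g x))"
        using g g' ig ga x by (simp add: ga_mult ga_closed)
      also have "\<dots> = z" using g' ga_inv[OF gr ga g(1) x] by simp
      finally have "z = f (g' \<otimes>\<^bsub>G\<^esub> inv\<^bsub>G\<^esub> g) y" by simp
      moreover have "g' \<otimes>\<^bsub>G\<^esub> inv\<^bsub>G\<^esub> g \<in> carrier G" using ig g' gr by (simp add: group.is_monoid monoid.m_closed)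
      ultimately show "z \<in> orbit G f y" unfolding orbit_def by auto
    qed
  qed
qed

locale BA =
  fixes G :: "('g, 'b) monoid_scheme"
    and V :: "'v set" and E :: "'e set" and H :: "'h set"
    and eo :: "'h \<Rightarrow> 'e" and vt :: "'h \<Rightarrow> 'v" and sc :: "'h \<Rightarrow> 'h" and m :: "'v \<Rightarrow> nat"
    and av :: "'g \<Rightarrow> 'v \<Rightarrow> 'v" and ae :: "'g \<Rightarrow> 'e \<Rightarrow> 'e" and ah :: "'g \<Rightarrow> 'h \<Rightarrow> 'h"
  assumes gr: "group G"
    and bg: "brauer_graph V E H eo vt sc m"
    and fa: "free_brauer_action G V E H eo vt sc m av ae ah"
begin

lemma gav: "group_act G V av" and gae: "group_act G E ae" and gah: "group_act G H ah"
  using fa by (auto simp: free_brauer_action_def brauer_action_def)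
lemma compat: "g \<in> carrier G \<Longrightarrow> h \<in> H \<Longrightarrow> eo (ah g h) = ae g (eo h) \<and> vt (ah g h) = av g (vt h)"
  using fa by (auto simp: free_brauer_action_def brauer_action_def)
lemma mpres: "g \<in> carrier G \<Longrightarrow> v \<in> V \<Longrightarrow> m (av g v) = m v"
  using fa by (auto simp: free_brauer_action_def brauer_action_def)
lemma finH: "finite H" and finE: "finite E" and Ene: "E \<noteq> {}"
  and inc: "h \<in> H \<Longrightarrow> eo h \<in> E \<and> vt h \<in> V"
  and fib2: "e \<in> E \<Longrightarrow> card {h\<in>H. eo h = e} = 2"
  and conn: "\<mu> \<in> V \<Longrightarrow> \<nu> \<in> V \<Longrightarrow> (\<mu>, \<nu>) \<in> (graph_adj H eo vt)\<^sup>*"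
  using bg by (auto simp: brauer_graph_def)

lemma vt_orbit: "h \<in> H \<Longrightarrow> vt ` orbit G ah h = orbit G av (vt h)"
  unfolding orbit_def image_image using compat by (auto intro: image_cong)
lemma eo_orbit: "h \<in> H \<Longrightarrow> eo ` orbit G ah h = orbit G ae (eo h)"
  unfolding orbit_def image_image using compat by (auto intro: image_cong)

lemma val_le:
  assumes g: "g \<in> carrier G" and v: "v \<in> V"
  shows "valency H vt v \<le> valency H vt (av g v)"
  unfolding valency_def
proof (rule card_inj_on_le[of "ah g"])
  show "inj_on (ah g) {h \<in> H. vt h = v}"
    by (rule inj_on_inverseI[where g="ah (inv\<^bsub>G\<^esub> g)"]) (use ga_inv[OF gr gah g] in auto)
  show "ah g ` {h \<in> H. vt h = v} \<subseteq> {h \<in> H. vt h = av g v}"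
    using compat g ga_closed[OF gah g] by auto
  show "finite {h \<in> H. vt h = av g v}" using finH by simp
qed

lemma val_eq:
  assumes g: "g \<in> carrier G" and v: "v \<in> V"
  shows "valency H vt (av g v) = valency H vt v"
proof -
  have ig: "inv\<^bsub>G\<^esub> g \<in> carrier G" using g gr by (simp add: group.inv_closed)
  have "valency H vt (av g v) \<le> valency H vt (av (inv\<^bsub>G\<^esub> g) (av g v))"
    using val_le[OF ig ga_closed[OF gav g v]] .
  also have "\<dots> = valency H vt v" using ga_inv[OF gr gav g v] by simp
  finally show ?thesis using val_le[OF g v] by simp
qed

lemma fiber_img:
  assumes h: "h \<in> H"
  shows "{X \<in> orbit G ah ` H. vt ` X = orbit G av (vt h)} = orbit G ah ` {k\<in>H. vt k = vt h}"
proof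
  show "orbit G ah ` {k\<in>H. vt k = vt h} \<subseteq> {X \<in> orbit G ah ` H. vt ` X = orbit G av (vt h)}"
  proof
    fix X assume "X \<in> orbit G ah ` {k\<in>H. vt k = vt h}"
    then obtain k where "k \<in> H" "vt k = vt h" "X = orbit G ah k" by auto
    then show "X \<in> {X \<in> orbit G ah ` H. vt ` X = orbit G av (vt h)}" using vt_orbit by auto
  qed
  show "{X \<in> orbit G ah ` H. vt ` X = orbit G av (vt h)} \<subseteq> orbit G ah ` {k\<in>H. vt k = vt h}"
  proof
    fix X assume "X \<in> {X \<in> orbit G ah ` H. vt ` X = orbit G av (vt h)}"
    then obtain k0 where k0: "k0 \<in> H" "X = orbit G ah k0" "orbit G av (vt k0) = orbit G av (vt h)"
      using vt_orbit by auto
    have "vt h \<in> orbit G av (vt k0)" using k0(3) orbit_self[OF gr gav] inc h by auto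
    then obtain g where g: "g \<in> carrier G" "vt h = av g (vt k0)" unfolding orbit_def by auto
    define k where "k = ah g k0"
    have kH: "k \<in> H" using ga_closed[OF gah g(1) k0(1)] k_def by simp
    have "vt k = vt h" using compat[OF g(1) k0(1)] g k_def by simp
    moreover have "orbit G ah k = X"
      using orbit_eq[OF gr gah k0(1)] k0(2) g(1) k_def unfolding orbit_def by auto
    ultimately show "X \<in> orbit G ah ` {k\<in>H. vt k = vt h}" using kH by blast
  qed
qed

lemma b_bounds:
  assumes h: "h \<in> H"
  shows "1 \<le> valency (orbit G ah ` H) (\<lambda>X. vt ` X) (orbit G av (vt h))"
    "valency (orbit G ah ` H) (\<lambda>X. vt ` X) (orbit G av (vt h)) \<le> valency H vt (vt h)"
proof -
  have eq: "valency (orbit G ah ` H) (\<lambda>X. vt ` X) (orbit G av (vt h)) = card (orbit G ah ` {k\<in>H. vt k = vt h})"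
    unfolding valency_def using fiber_img[OF h] by simp
  have fin: "finite {k\<in>H. vt k = vt h}" using finH by simp
  show "valency (orbit G ah ` H) (\<lambda>X. vt ` X) (orbit G av (vt h)) \<le> valency H vt (vt h)"
    using card_image_le[OF fin, of "orbit G ah"] eq unfolding valency_def by simp
  have "orbit G ah ` {k\<in>H. vt k = vt h} \<noteq> {}" using h by auto
  then show "1 \<le> valency (orbit G ah ` H) (\<lambda>X. vt ` X) (orbit G av (vt h))"
    unfolding eq using fin by (simp add: Suc_leI card_gt_0_iff)
qed

lemma mult_eq:
  assumes h: "h \<in> H"
  shows "orbit_mult G H vt m ah (orbit G av (vt h)) =
     valency H vt (vt h) * m (vt h) div valency (orbit G ah ` H) (\<lambda>X. vt ` X) (orbit G av (vt h))"
proof -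
  define \<mu> where "\<mu> = (SOME \<mu>. \<mu> \<in> orbit G av (vt h))"
  have "\<mu> \<in> orbit G av (vt h)" unfolding \<mu>_def
    by (rule someI[of _ "vt h"]) (use orbit_self[OF gr gav] inc h in auto)
  then obtain g where g: "g \<in> carrier G" "\<mu> = av g (vt h)" unfolding orbit_def by auto
  have "valency H vt \<mu> = valency H vt (vt h)" "m \<mu> = m (vt h)"
    using g val_eq mpres inc h by auto
  then show ?thesis unfolding orbit_mult_def Let_def \<mu>_def[symmetric] by simp
qed

lemma trunc_eq:
  assumes h: "h \<in> H"
  shows "truncated (orbit G ah ` H) (\<lambda>X. vt ` X) (orbit_mult G H vt m ah) (orbit G ah h) \<longleftrightarrow> truncated H vt m h"
proof -
  define a where "a = valency H vt (vt h)"
  define b where "b = valency (orbit G ah ` H) (\<lambda>X. vt ` X) (orbit G av (vt h))"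
  have ab: "1 \<le> b" "b \<le> a" using b_bounds[OF h] a_def b_def by auto
  have "truncated (orbit G ah ` H) (\<lambda>X. vt ` X) (orbit_mult G H vt m ah) (orbit G ah h) \<longleftrightarrow>
        b = 1 \<and> a * m (vt h) div b = 1"
    unfolding truncated_def vt_orbit[OF h] mult_eq[OF h] a_def b_def by simp
  also have "\<dots> \<longleftrightarrow> a = 1 \<and> m (vt h) = 1" using ab by auto
  finally show ?thesis unfolding truncated_def a_def .
qed

lemma inj_val: "inj_on vt H \<longleftrightarrow> (\<forall>h\<in>H. valency H vt (vt h) = 1)"
proof
  assume i: "inj_on vt H"
  show "\<forall>h\<in>H. valency H vt (vt h) = 1"
  proof
    fix h assume h: "h \<in> H"
    have "{k\<in>H. vt k = vt h} = {h}"
    proof (intro equalityI subsetI)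
      fix k assume "k \<in> {k\<in>H. vt k = vt h}"
      then have "k \<in> H" "vt k = vt h" by auto
      then have "k = h" using inj_onD[OF i, of k h] h by simp
      then show "k \<in> {h}" by simp
    qed (use h in simp)
    then show "valency H vt (vt h) = 1" unfolding valency_def by simp
  qed
next
  assume a: "\<forall>h\<in>H. valency H vt (vt h) = 1"
  show "inj_on vt H"
  proof (rule inj_onI)
    fix x y assume xy: "x \<in> H" "y \<in> H" "vt x = vt y"
    have "valency H vt (vt x) = 1" using bspec[OF a xy(1)] .
    then have "card {k\<in>H. vt k = vt x} = 1" unfolding valency_def .
    then obtain z where z: "{k\<in>H. vt k = vt x} = {z}" by (metis One_nat_def card_1_singleton_iff)
    have "x \<in> {k\<in>H. vt k = vt x}" "y \<in> {k\<in>H. vt k = vt x}" using xy by simp_all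
    then have "x = z" "y = z" unfolding z by simp_all
    then show "x = y" by simp
  qed
qed

lemma conn_single:
  assumes i: "inj_on vt H"
  shows "card E = 1"
proof -
  obtain e0 where e0: "e0 \<in> E" using Ene by auto
  have "{h\<in>H. eo h = e0} \<noteq> {}" using fib2[OF e0] by (metis card.empty zero_neq_numeral)
  then obtain h0 where h0: "h0 \<in> H" "eo h0 = e0" by auto
  have key: "(vt h0, y) \<in> (graph_adj H eo vt)\<^sup>* \<Longrightarrow> \<exists>k\<in>H. eo k = e0 \<and> vt k = y" for y
  proof (induction rule: rtrancl_induct)
    case base then show ?case using h0 by auto
  next
    case (step y z)
    then obtain k where k: "k \<in> H" "eo k = e0" "vt k = y" by auto
    from step(2) obtain a b where ab: "a \<in> H" "b \<in> H" "eo a = eo b" "y = vt a" "z = vt b"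
      unfolding graph_adj_def by auto
    have "a = k" using inj_onD[OF i, of a k] ab k by simp
    then show ?case using ab k by auto
  qed
  have "E = {e0}"
  proof
    show "E \<subseteq> {e0}"
    proof
      fix e assume e: "e \<in> E"
      have "{h\<in>H. eo h = e} \<noteq> {}" using fib2[OF e] by (metis card.empty zero_neq_numeral)
      then obtain k where k: "k \<in> H" "eo k = e" by auto
      have "(vt h0, vt k) \<in> (graph_adj H eo vt)\<^sup>*" using conn inc h0 k by blast
      then obtain k' where k': "k' \<in> H" "eo k' = e0" "vt k' = vt k"
        using key by blast
      have "k' = k" using inj_onD[OF i, of k' k] k k' by simp
      then show "e \<in> {e0}" using k k' by auto
    qed
  qed (use e0 in auto)
  then show ?thesis by simp
qed

lemma exc_eq:
  "(card E = 1 \<and> inj_on vt H \<and> (\<forall>h\<in>H. m (vt h) = 1)) \<longleftrightarrow>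
   (card (orbit G ae ` E) = 1 \<and> inj_on (\<lambda>X. vt ` X) (orbit G ah ` H) \<and>
    (\<forall>X\<in>orbit G ah ` H. orbit_mult G H vt m ah (vt ` X) = 1))"
proof
  assume a: "card E = 1 \<and> inj_on vt H \<and> (\<forall>h\<in>H. m (vt h) = 1)"
  then obtain e where e: "E = {e}" by (auto simp: card_1_singleton_iff)
  have i: "inj_on vt H" using a by simp
  have inj': "inj_on (\<lambda>X. vt ` X) (orbit G ah ` H)"
  proof (rule inj_onI)
    fix X Y assume XY: "X \<in> orbit G ah ` H" "Y \<in> orbit G ah ` H" "vt ` X = vt ` Y"
    then obtain h k where hk: "h \<in> H" "k \<in> H" "X = orbit G ah h" "Y = orbit G ah k" by auto
    have "orbit G av (vt h) = orbit G av (vt k)" using XY hk vt_orbit by auto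
    then have "vt k \<in> orbit G av (vt h)" using orbit_self[OF gr gav] inc hk by auto
    then obtain g where g: "g \<in> carrier G" "vt k = av g (vt h)" unfolding orbit_def by auto
    then have "vt k = vt (ah g h)" using compat hk by auto
    then have "k = ah g h" using i ga_closed[OF gah g(1) hk(1)] hk by (auto dest: inj_onD)
    then have "k \<in> orbit G ah h" using g unfolding orbit_def by auto
    then show "X = Y" using orbit_eq[OF gr gah hk(1)] hk by simp
  qed
  have "\<forall>X\<in>orbit G ah ` H. orbit_mult G H vt m ah (vt ` X) = 1"
  proof
    fix X assume "X \<in> orbit G ah ` H"
    then obtain h where h: "h \<in> H" "X = orbit G ah h" by auto
    have "valency H vt (vt h) = 1" using i h inj_val by auto
    then show "orbit_mult G H vt m ah (vt ` X) = 1"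
    proof -
      have "valency (orbit G ah ` H) (\<lambda>X. vt ` X) (orbit G av (vt h)) = 1"
        using b_bounds[OF h(1)] \<open>valency H vt (vt h) = 1\<close> by linarith
      then show ?thesis
        using a h \<open>valency H vt (vt h) = 1\<close> unfolding h(2) vt_orbit[OF h(1)] mult_eq[OF h(1)] by simp
    qed
  qed
  then show "card (orbit G ae ` E) = 1 \<and> inj_on (\<lambda>X. vt ` X) (orbit G ah ` H) \<and>
    (\<forall>X\<in>orbit G ah ` H. orbit_mult G H vt m ah (vt ` X) = 1)" using inj' e by simp
next
  assume a: "card (orbit G ae ` E) = 1 \<and> inj_on (\<lambda>X. vt ` X) (orbit G ah ` H) \<and>
    (\<forall>X\<in>orbit G ah ` H. orbit_mult G H vt m ah (vt ` X) = 1)"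
  have am: "valency H vt (vt h) = 1 \<and> m (vt h) = 1" if h: "h \<in> H" for h
  proof -
    have oh: "orbit G ah h \<in> orbit G ah ` H" using h by simp
    have ia: "inj_on (\<lambda>X. vt ` X) (orbit G ah ` H)" using a by simp
    have "{X \<in> orbit G ah ` H. vt ` X = orbit G av (vt h)} = {orbit G ah h}"
    proof
      show "{orbit G ah h} \<subseteq> {X \<in> orbit G ah ` H. vt ` X = orbit G av (vt h)}"
        using oh vt_orbit[OF h] by simp
      show "{X \<in> orbit G ah ` H. vt ` X = orbit G av (vt h)} \<subseteq> {orbit G ah h}"
      proof
        fix X assume X: "X \<in> {X \<in> orbit G ah ` H. vt ` X = orbit G av (vt h)}"
        then have "vt ` X = vt ` orbit G ah h" using vt_orbit[OF h] by simp
        then have "X = orbit G ah h" using inj_onD[OF ia _ _ oh] X by simp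
        then show "X \<in> {orbit G ah h}" by simp
      qed
    qed
    then have b1: "valency (orbit G ah ` H) (\<lambda>X. vt ` X) (orbit G av (vt h)) = 1"
      unfolding valency_def by simp
    have "orbit_mult G H vt m ah (vt ` orbit G ah h) = 1" using a oh by blast
    then have "orbit_mult G H vt m ah (orbit G av (vt h)) = 1" using vt_orbit[OF h] by simp
    then show ?thesis unfolding mult_eq[OF h] b1 by simp
  qed
  then have "inj_on vt H" using inj_val by auto
  then show "card E = 1 \<and> inj_on vt H \<and> (\<forall>h\<in>H. m (vt h) = 1)" using conn_single am by auto
qed

end

theorem proposition2p8:
  fixes G :: "('g, 'b) monoid_scheme"
    and V :: "'v set" and E :: "'e set" and H :: "'h set"
    and eo :: "'h \<Rightarrow> 'e" and vt :: "'h \<Rightarrow> 'v" and sc :: "'h \<Rightarrow> 'h" and m :: "'v \<Rightarrow> nat"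
    and av :: "'g \<Rightarrow> 'v \<Rightarrow> 'v" and ae :: "'g \<Rightarrow> 'e \<Rightarrow> 'e" and ah :: "'g \<Rightarrow> 'h \<Rightarrow> 'h"
  assumes "comm_group G" and "finite (carrier G)"
    and "brauer_graph V E H eo vt sc m"
    and "free_brauer_action G V E H eo vt sc m av ae ah"
  shows "\<exists>f0 f1.
    quiver_iso
      (orbit_quiver G (brauer_quiver V E H eo vt sc m) ae (\<lambda>g. map_option (ah g)))
      (brauer_quiver (orbit G av ` V) (orbit G ae ` E) (orbit G ah ` H)
         (\<lambda>X. eo ` X) (\<lambda>X. vt ` X) (\<lambda>X. sc ` X) (orbit_mult G H vt m ah))
      f0 f1 \<and>
    (\<forall>e\<in>E. f0 (orbit G ae e) = orbit G ae e) \<and>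
    (\<forall>a\<in>qarrows (brauer_quiver V E H eo vt sc m).
        f1 (orbit G (\<lambda>g. map_option (ah g)) a) = map_option (orbit G ah) a)"
proof -
  have grp: "group G" using assms(1) by (simp add: comm_group_def)
  interpret BA G V E H eo vt sc m av ae ah
    by (rule BA.intro[OF grp assms(3) assms(4)])
  define f1 where "f1 = (\<lambda>A::'h option set. map_option (orbit G ah) (SOME a. a \<in> A))"
  have one: "\<one>\<^bsub>G\<^esub> \<in> carrier G" by (simp add: gr group.is_monoid monoid.one_closed)
  have orbS: "orbit G (\<lambda>g. map_option (ah g)) (Some h) = Some ` orbit G ah h" for h
    unfolding orbit_def by (simp add: image_image)
  have orbN: "orbit G (\<lambda>g. map_option (ah g)) None = {None}"
    unfolding orbit_def using one by auto
  have f1S: "f1 (Some ` orbit G ah h) = Some (orbit G ah h)" if h: "h \<in> H" for h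
  proof -
    define a where "a = (SOME a. a \<in> Some ` orbit G ah h)"
    have "a \<in> Some ` orbit G ah h" unfolding a_def
      by (rule someI[of _ "Some h"]) (use orbit_self[OF gr gah h] in auto)
    then obtain k where k: "k \<in> orbit G ah h" "a = Some k" by auto
    have "orbit G ah k = orbit G ah h" using orbit_eq[OF gr gah h k(1)] .
    then show ?thesis unfolding f1_def a_def[symmetric] using k by simp
  qed
  have f1N: "f1 {None} = None" by (simp add: f1_def)
  show ?thesis
  proof (rule exI[of _ id], rule exI[of _ f1])
    show "quiver_iso
      (orbit_quiver G (brauer_quiver V E H eo vt sc m) ae (\<lambda>g. map_option (ah g)))
      (brauer_quiver (orbit G av ` V) (orbit G ae ` E) (orbit G ah ` H)
         (\<lambda>X. eo ` X) (\<lambda>X. vt ` X) (\<lambda>X. sc ` X) (orbit_mult G H vt m ah))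
      id f1 \<and>
    (\<forall>e\<in>E. id (orbit G ae e) = orbit G ae e) \<and>
    (\<forall>a\<in>qarrows (brauer_quiver V E H eo vt sc m).
        f1 (orbit G (\<lambda>g. map_option (ah g)) a) = map_option (orbit G ah) a)"
    proof (cases "card E = 1 \<and> inj_on vt H \<and> (\<forall>h\<in>H. m (vt h) = 1)")
      case True
      then have T': "card (orbit G ae ` E) = 1 \<and> inj_on (\<lambda>X. vt ` X) (orbit G ah ` H) \<and>
        (\<forall>X\<in>orbit G ah ` H. orbit_mult G H vt m ah (vt ` X) = 1)" using exc_eq by blast
      obtain e where e: "E = {e}" using True by (auto simp: card_1_singleton_iff)
      have oe: "orbit G ae e = {e}"
        using orbit_sub[OF gae, of e] orbit_self[OF gr gae, of e] e by auto
      have Q: "brauer_quiver V E H eo vt sc m =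
        \<lparr>qverts = E, qarrows = {None}, qsrc = (\<lambda>_. the_elem E), qtgt = (\<lambda>_. the_elem E)\<rparr>"
        unfolding brauer_quiver_def using True by simp
      have Q': "brauer_quiver (orbit G av ` V) (orbit G ae ` E) (orbit G ah ` H)
         (\<lambda>X. eo ` X) (\<lambda>X. vt ` X) (\<lambda>X. sc ` X) (orbit_mult G H vt m ah) =
         \<lparr>qverts = orbit G ae ` E, qarrows = {None}, qsrc = (\<lambda>_. the_elem (orbit G ae ` E)),
          qtgt = (\<lambda>_. the_elem (orbit G ae ` E))\<rparr>"
        unfolding brauer_quiver_def using T' by simp
      show ?thesis unfolding Q Q' quiver_iso_def orbit_quiver_def
        using f1N orbN oe e by (simp add: bij_betw_def)
    next
      case False
      then have F': "\<not> (card (orbit G ae ` E) = 1 \<and> inj_on (\<lambda>X. vt ` X) (orbit G ah ` H) \<and>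
        (\<forall>X\<in>orbit G ah ` H. orbit_mult G H vt m ah (vt ` X) = 1))" using exc_eq by blast
      define N where "N = {h\<in>H. \<not> truncated H vt m h}"
      define N' where "N' = {X\<in>orbit G ah ` H. \<not> truncated (orbit G ah ` H) (\<lambda>X. vt ` X) (orbit_mult G H vt m ah) X}"
      have Q: "brauer_quiver V E H eo vt sc m =
        \<lparr>qverts = E, qarrows = Some ` N,
            qsrc = (\<lambda>a. eo (the a)), qtgt = (\<lambda>a. eo (sc (the a)))\<rparr>"
        unfolding brauer_quiver_def N_def by (simp only: if_not_P[OF False])
      have Q': "brauer_quiver (orbit G av ` V) (orbit G ae ` E) (orbit G ah ` H)
         (\<lambda>X. eo ` X) (\<lambda>X. vt ` X) (\<lambda>X. sc ` X) (orbit_mult G H vt m ah) =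
         \<lparr>qverts = orbit G ae ` E, qarrows = Some ` N',
            qsrc = (\<lambda>a. eo ` (the a)), qtgt = (\<lambda>a. eo ` (sc ` (the a)))\<rparr>"
        unfolding brauer_quiver_def N'_def by (simp only: if_not_P[OF F'])
      have NH: "N \<subseteq> H" unfolding N_def by auto
      have arr: "orbit G (\<lambda>g. map_option (ah g)) ` Some ` N = (\<lambda>h. Some ` orbit G ah h) ` N"
        using orbS by (simp add: image_image)
      have NN': "orbit G ah ` N = N'"
        unfolding N_def N'_def using trunc_eq by auto
      have inj: "inj_on f1 ((\<lambda>h. Some ` orbit G ah h) ` N)"
      proof (rule inj_onI)
        fix A B assume A: "A \<in> (\<lambda>h. Some ` orbit G ah h) ` N" and B: "B \<in> (\<lambda>h. Some ` orbit G ah h) ` N"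
          and eq: "f1 A = f1 B"
        obtain h where h: "h \<in> N" "A = Some ` orbit G ah h" using A by auto
        obtain k where k: "k \<in> N" "B = Some ` orbit G ah k" using B by auto
        have "h \<in> H" "k \<in> H" using h k NH by auto
        then have "Some (orbit G ah h) = Some (orbit G ah k)"
          using eq h(2) k(2) f1S by metis
        then show "A = B" using h k by simp
      qed
      have img: "f1 ` ((\<lambda>h. Some ` orbit G ah h) ` N) = Some ` N'"
      proof -
        have "f1 ` ((\<lambda>h. Some ` orbit G ah h) ` N) = (\<lambda>h. Some (orbit G ah h)) ` N"
          unfolding image_image by (rule image_cong) (use f1S NH in auto)
        also have "\<dots> = Some ` N'" using NN' by (auto simp: image_image[symmetric])
        finally show ?thesis .
      qed
      have bij: "bij_betw f1 ((\<lambda>h. Some ` orbit G ah h) ` N) (Some ` N')"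
        using inj img by (simp add: bij_betw_def)
      have st: "\<forall>A\<in>(\<lambda>h. Some ` orbit G ah h) ` N.
          eo ` the (f1 A) = (\<lambda>a. eo (the a)) ` A \<and>
          eo ` sc ` the (f1 A) = (\<lambda>a. eo (sc (the a))) ` A"
      proof
        fix A assume "A \<in> (\<lambda>h. Some ` orbit G ah h) ` N"
        then obtain h where h: "h \<in> N" "A = Some ` orbit G ah h" by auto
        then show "eo ` the (f1 A) = (\<lambda>a. eo (the a)) ` A \<and>
          eo ` sc ` the (f1 A) = (\<lambda>a. eo (sc (the a))) ` A"
          using f1S NH by (auto simp: image_image)
      qed
      have third: "\<forall>a\<in>Some ` N. f1 (orbit G (\<lambda>g. map_option (ah g)) a) = map_option (orbit G ah) a"
        using f1S NH orbS by auto
      show ?thesis unfolding Q Q' quiver_iso_def orbit_quiver_def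
        using bij st third arr by simp
    qed
  qed
qed

end
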